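(* Let $\Omega\subset\mathbb{R}^d$ be compact, let $X_1,\ldots,X_n$ be i.i.d. with density $\varphi_P$ and $Y_1,\ldots,Y_n$ i.i.d. with density $\varphi_D$, independent of the $X_i$. Let $\mathcal{C}=\{C^1,\ldots,C^{|\mathcal{C}|}\}$ be a finite partition of $\Omega$ and $A=[\alpha_{ij}]$ a transportation matrix for $\mathcal{C}$. For each $k$, generate a shadow site $X'_k$ independently as follows: let $C^i$ be the cell containing $Y_k$; sample $J_k=j'$ with probability $\alpha_{ij'}/\varphi_D(C^i)$; then sample $X'_k$ from the density $\varphi_P$ conditioned on $X'_k\in C^{J_k}$. Then the shadow sites $X'_1,\ldots,X'_n$ are (i) jointly independent of $X_1,\ldots,X_n$, and (ii) mutually i.i.d. with density $\varphi_P$.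
   Context: For a cell $C$, $\varphi_P(C)=\int_C\varphi_P$, $\varphi_D(C)=\int_C\varphi_D$. A transportation matrix for $\mathcal{C}$ is a matrix $[\alpha_{ij}]$ with $\alpha_{ij}\ge0$, $\sum_j\alpha_{ij}=\varphi_D(C^i)$ for all $i$ and $\sum_i\alpha_{ij}=\varphi_P(C^j)$ for all $j$. *)

theory Defs
  imports "HOL-Probability.Probability"
begin

definition cell_mass :: "('a::euclidean_space \<Rightarrow> real) \<Rightarrow> 'a set \<Rightarrow> real" where
  "cell_mass \<phi> C = set_lebesgue_integral lborel C \<phi>"

definition finite_partition :: "'a::euclidean_space set \<Rightarrow> (nat \<Rightarrow> 'a set) \<Rightarrow> nat \<Rightarrow> bool" where
  "finite_partition \<Omega> C m \<longleftrightarrow>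
     (\<Union>i<m. C i) = \<Omega> \<and>
     (\<forall>i<m. \<forall>j<m. i \<noteq> j \<longrightarrow> C i \<inter> C j = {}) \<and>
     (\<forall>i<m. C i \<in> sets borel)"

text \<open>Transportation matrix: rows indexed by the cell of Y (mass \<open>\<phi>_D\<close>),
  columns by the cell of X (mass \<open>\<phi>_P\<close>).\<close>
definition transportation_matrix ::
  "('a::euclidean_space \<Rightarrow> real) \<Rightarrow> ('a \<Rightarrow> real) \<Rightarrow> (nat \<Rightarrow> 'a set) \<Rightarrow> nat \<Rightarrow> (nat \<Rightarrow> nat \<Rightarrow> real) \<Rightarrow> bool" where
  "transportation_matrix \<phi>P \<phi>D C m \<alpha> \<longleftrightarrow>
     (\<forall>i<m. \<forall>j<m. 0 \<le> \<alpha> i j) \<and>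
     (\<forall>i<m. (\<Sum>j<m. \<alpha> i j) = cell_mass \<phi>D (C i)) \<and>
     (\<forall>j<m. (\<Sum>i<m. \<alpha> i j) = cell_mass \<phi>P (C j))"

end

theory Submission
  imports Defs
begin

theorem lemma6:
  fixes M :: "'b measure"
    and \<Omega> :: "'a::euclidean_space set"
    and \<phi>P \<phi>D :: "'a \<Rightarrow> real"
    and C :: "nat \<Rightarrow> 'a set" and m :: nat
    and \<alpha> :: "nat \<Rightarrow> nat \<Rightarrow> real"
    and n :: nat
    and X Y X' :: "nat \<Rightarrow> 'b \<Rightarrow> 'a"
    and J :: "nat \<Rightarrow> 'b \<Rightarrow> nat"
  assumes "prob_space M"
    and "compact \<Omega>"
    and "\<phi>P \<in> borel_measurable borel" "\<phi>D \<in> borel_measurable borel"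
    and "\<And>x. 0 \<le> \<phi>P x" "\<And>x. 0 \<le> \<phi>D x"
    and "\<And>x. x \<notin> \<Omega> \<Longrightarrow> \<phi>P x = 0" "\<And>x. x \<notin> \<Omega> \<Longrightarrow> \<phi>D x = 0"
    and "finite_partition \<Omega> C m"
    and "transportation_matrix \<phi>P \<phi>D C m \<alpha>"
    \<comment> \<open>X_1..X_n i.i.d. with density \<phi>P\<close>
    and "\<And>k. k < n \<Longrightarrow> distributed M lborel (X k) (\<lambda>x. ennreal (\<phi>P x))"
    and "prob_space.indep_vars M (\<lambda>_. borel) X {..<n}"
    \<comment> \<open>Y_1..Y_n i.i.d. with density \<phi>D\<close>
    and "\<And>k. k < n \<Longrightarrow> distributed M lborel (Y k) (\<lambda>x. ennreal (\<phi>D x))"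
    \<comment> \<open>the shadow-site mechanism: joint law of (Y_k, J_k, X'_k)\<close>
    and "\<And>k. k < n \<Longrightarrow> J k \<in> measurable M (count_space UNIV)"
    and "\<And>k. k < n \<Longrightarrow> X' k \<in> borel_measurable M"
    and "\<And>k \<omega>. k < n \<Longrightarrow> \<omega> \<in> space M \<Longrightarrow> J k \<omega> < m"
    and "\<And>k A B j. k < n \<Longrightarrow> A \<in> sets borel \<Longrightarrow> B \<in> sets borel \<Longrightarrow> j < m \<Longrightarrow>
           measure M {\<omega> \<in> space M. Y k \<omega> \<in> A \<and> J k \<omega> = j \<and> X' k \<omega> \<in> B} =
           (\<Sum>i<m. cell_mass \<phi>D (A \<inter> C i) * (\<alpha> i j / cell_mass \<phi>D (C i))
                     * (cell_mass \<phi>P (B \<inter> C j) / cell_mass \<phi>P (C j)))"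
    \<comment> \<open>the X_k and the triples (Y_k, J_k, X'_k), k < n, are all mutually independent
        (shadow sites generated independently; Y's independent of X's)\<close>
    and "prob_space.indep_sets M
           (case_sum (\<lambda>k. {X k -` A \<inter> space M | A. A \<in> sets borel})
                     (\<lambda>k. {(\<lambda>\<omega>. (Y k \<omega>, J k \<omega>, X' k \<omega>)) -` A \<inter> space M | A.
                              A \<in> sets (borel \<Otimes>\<^sub>M count_space UNIV \<Otimes>\<^sub>M borel)}))
           ({..<n} <+> {..<n})"
  shows "prob_space.indep_var M
           (\<Pi>\<^sub>M k\<in>{..<n}. borel) (\<lambda>\<omega>. \<lambda>k\<in>{..<n}. X k \<omega>)
           (\<Pi>\<^sub>M k\<in>{..<n}. borel) (\<lambda>\<omega>. \<lambda>k\<in>{..<n}. X' k \<omega>)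
       \<and> prob_space.indep_vars M (\<lambda>_. borel) X' {..<n}
       \<and> (\<forall>k<n. distributed M lborel (X' k) (\<lambda>x. ennreal (\<phi>P x)))"
proof -
  interpret prob_space M by fact
  define Z where "Z = case_sum X X'"
  define S where "S = ({..<n::nat} <+> {..<n::nat})"
  have Xm: "X k \<in> borel_measurable M" if "k < n" for k
    using assms(11)[OF that] unfolding distributed_def by simp
  have indZ: "indep_vars (\<lambda>_. borel) Z S"
    unfolding indep_vars_def2
  proof
    show "\<forall>i\<in>S. random_variable borel (Z i)"
      using Xm assms(15) by (auto simp: S_def Z_def)
    show "indep_sets (\<lambda>i. {Z i -` A \<inter> space M |A. A \<in> sets borel}) S"
      unfolding S_def
    proof (rule indep_sets_mono_sets[OF assms(18)])
      fix i assume "i \<in> {..<n} <+> {..<n}"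
      show "{Z i -` A \<inter> space M |A. A \<in> sets borel} \<subseteq>
        case_sum (\<lambda>k. {X k -` A \<inter> space M | A. A \<in> sets borel})
                     (\<lambda>k. {(\<lambda>\<omega>. (Y k \<omega>, J k \<omega>, X' k \<omega>)) -` A \<inter> space M | A.
                              A \<in> sets (borel \<Otimes>\<^sub>M count_space UNIV \<Otimes>\<^sub>M borel)}) i"
      proof (cases i)
        case (Inl k) then show ?thesis by (auto simp: Z_def)
      next
        case (Inr k)
        show ?thesis
        proof
          fix x assume "x \<in> {Z i -` A \<inter> space M |A. A \<in> sets borel}"
          then obtain A where A: "A \<in> sets borel" "x = X' k -` A \<inter> space M"
            using Inr by (auto simp: Z_def)
          have "x = (\<lambda>\<omega>. (Y k \<omega>, J k \<omega>, X' k \<omega>)) -` (UNIV \<times> UNIV \<times> A) \<inter> space M"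
            using A by auto
          moreover have "UNIV \<times> UNIV \<times> A \<in> sets (borel \<Otimes>\<^sub>M count_space UNIV \<Otimes>\<^sub>M borel)"
            using A by (metis pair_measureI sets_UNIV space_borel space_count_space sets.top)
          ultimately show "x \<in> case_sum (\<lambda>k. {X k -` A \<inter> space M | A. A \<in> sets borel})
                     (\<lambda>k. {(\<lambda>\<omega>. (Y k \<omega>, J k \<omega>, X' k \<omega>)) -` A \<inter> space M | A.
                              A \<in> sets (borel \<Otimes>\<^sub>M count_space UNIV \<Otimes>\<^sub>M borel)}) i"
            using Inr by auto
        qed
      qed
    qed
  qed
  have P1: "indep_var
           (\<Pi>\<^sub>M k\<in>{..<n}. borel) (\<lambda>\<omega>. \<lambda>k\<in>{..<n}. X k \<omega>)
           (\<Pi>\<^sub>M k\<in>{..<n}. borel) (\<lambda>\<omega>. \<lambda>k\<in>{..<n}. X' k \<omega>)"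
  proof -
    have "indep_var (PiM (Inl`{..<n}) (\<lambda>_. borel)) (\<lambda>\<omega>. restrict (\<lambda>i. Z i \<omega>) (Inl`{..<n}))
                    (PiM (Inr`{..<n}) (\<lambda>_. borel)) (\<lambda>\<omega>. restrict (\<lambda>i. Z i \<omega>) (Inr`{..<n}))"
      by (rule indep_var_restrict[OF indZ]) (auto simp: S_def)
    then have "indep_var (\<Pi>\<^sub>M k\<in>{..<n}. borel) ((\<lambda>f. \<lambda>k\<in>{..<n}. f (Inl k)) \<circ> (\<lambda>\<omega>. restrict (\<lambda>i. Z i \<omega>) (Inl`{..<n})))
                    (\<Pi>\<^sub>M k\<in>{..<n}. borel) ((\<lambda>f. \<lambda>k\<in>{..<n}. f (Inr k)) \<circ> (\<lambda>\<omega>. restrict (\<lambda>i. Z i \<omega>) (Inr`{..<n})))"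
      by (rule indep_var_compose) (auto intro!: measurable_restrict measurable_component_singleton)
    moreover have "((\<lambda>f. \<lambda>k\<in>{..<n}. f (Inl k)) \<circ> (\<lambda>\<omega>. restrict (\<lambda>i. Z i \<omega>) (Inl`{..<n}))) = (\<lambda>\<omega>. \<lambda>k\<in>{..<n}. X k \<omega>)"
      "((\<lambda>f. \<lambda>k\<in>{..<n}. f (Inr k)) \<circ> (\<lambda>\<omega>. restrict (\<lambda>i. Z i \<omega>) (Inr`{..<n}))) = (\<lambda>\<omega>. \<lambda>k\<in>{..<n}. X' k \<omega>)"
      by (auto simp: Z_def fun_eq_iff restrict_def)
    ultimately show ?thesis by simp
  qed
  have P2: "indep_vars (\<lambda>_. borel) X' {..<n}"
  proof -
    have "indep_vars (\<lambda>k. PiM {Inr k} (\<lambda>_. borel)) (\<lambda>k \<omega>. restrict (\<lambda>i. Z i \<omega>) {Inr k}) {..<n}"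
      by (rule indep_vars_restrict[OF indZ]) (auto simp: S_def disjoint_family_on_def)
    then have "indep_vars (\<lambda>_. borel) (\<lambda>k \<omega>. (\<lambda>f. f (Inr k)) (restrict (\<lambda>i. Z i \<omega>) {Inr k})) {..<n}"
      by (rule indep_vars_compose2) (auto intro!: measurable_component_singleton)
    then show ?thesis by (simp add: Z_def)
  qed
  have part: "(\<Union>i<m. C i) = \<Omega>" "\<And>i j. i<m \<Longrightarrow> j<m \<Longrightarrow> i \<noteq> j \<Longrightarrow> C i \<inter> C j = {}"
    "\<And>i. i<m \<Longrightarrow> C i \<in> sets borel"
    using assms(9) unfolding finite_partition_def by auto
  have tm: "\<And>i j. i<m \<Longrightarrow> j<m \<Longrightarrow> 0 \<le> \<alpha> i j" "\<And>i. i<m \<Longrightarrow> (\<Sum>j<m. \<alpha> i j) = cell_mass \<phi>D (C i)"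
    "\<And>j. j<m \<Longrightarrow> (\<Sum>i<m. \<alpha> i j) = cell_mass \<phi>P (C j)"
    using assms(10) unfolding transportation_matrix_def by auto
  have cm: "cell_mass \<phi> S = (\<integral>x. indicator S x * \<phi> x \<partial>lborel)" for \<phi> :: "'a \<Rightarrow> real" and S
    unfolding cell_mass_def set_lebesgue_integral_def by simp
  have P3: "distributed M lborel (X' k) (\<lambda>x. ennreal (\<phi>P x))" if kn: "k < n" for k
  proof -
    have "integrable lborel (\<lambda>x. \<phi>P x * 1) \<longleftrightarrow> integrable M (\<lambda>x. (\<lambda>_. 1::real) (X k x))"
      by (rule distributed_integrable[OF assms(11)[OF kn]]) (auto simp: assms(5))
    then have Pint: "integrable lborel \<phi>P" by simp
    have Pintind: "integrable lborel (\<lambda>x. indicator S x * \<phi>P x)" if "S \<in> sets borel" for S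
      using integrable_mult_indicator[of S lborel \<phi>P] that Pint by simp
    have Ym: "Y k \<in> borel_measurable M"
      using assms(13)[OF kn] unfolding distributed_def by simp
    have Jm: "J k \<in> measurable M (count_space UNIV)" using assms(14)[OF kn] .
    have X'm: "X' k \<in> borel_measurable M" using assms(15)[OF kn] .
    have key: "measure M (X' k -` B \<inter> space M) = (\<integral>x. \<phi>P x * indicator B x \<partial>lborel)"
      if B: "B \<in> sets borel" for B
    proof -
      define E where "E j = {\<omega> \<in> space M. Y k \<omega> \<in> UNIV \<and> J k \<omega> = j \<and> X' k \<omega> \<in> B}" for j
      have Ev: "E j \<in> sets M" for j
        unfolding E_def using Ym Jm X'm B by measurable
      have XU: "X' k -` B \<inter> space M = (\<Union>j\<in>{..<m}. E j)"
        using assms(16)[OF kn] by (auto simp: E_def)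
      have "measure M (X' k -` B \<inter> space M) = (\<Sum>j<m. measure M (E j))"
      proof -
        have "disjoint_family_on E {..<m}" by (auto simp: disjoint_family_on_def E_def)
        then have "measure M (\<Union>j\<in>{..<m}. E j) = (\<Sum>j<m. measure M (E j))"
          using Ev by (intro finite_measure_finite_Union) auto
        then show ?thesis using XU by simp
      qed
      also have "\<dots> = (\<Sum>j<m. cell_mass \<phi>P (B \<inter> C j))"
      proof (rule sum.cong[OF refl])
        fix j assume j: "j \<in> {..<m}"
        have "measure M (E j) = (\<Sum>i<m. cell_mass \<phi>D (UNIV \<inter> C i) * (\<alpha> i j / cell_mass \<phi>D (C i))
                     * (cell_mass \<phi>P (B \<inter> C j) / cell_mass \<phi>P (C j)))"
          unfolding E_def using assms(17)[OF kn _ B, of UNIV j] j by simp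
        also have "\<dots> = (\<Sum>i<m. \<alpha> i j * (cell_mass \<phi>P (B \<inter> C j) / cell_mass \<phi>P (C j)))"
        proof (rule sum.cong[OF refl])
          fix i assume i: "i \<in> {..<m}"
          have "cell_mass \<phi>D (C i) * (\<alpha> i j / cell_mass \<phi>D (C i)) = \<alpha> i j"
          proof (cases "cell_mass \<phi>D (C i) = 0")
            case True
            then have "(\<Sum>j<m. \<alpha> i j) = 0" using tm(2) i by simp
            then have "\<alpha> i j = 0" using sum_nonneg_eq_0_iff[of "{..<m}" "\<alpha> i"] tm(1) i j by auto
            then show ?thesis by simp
          qed simp
          then show "cell_mass \<phi>D (UNIV \<inter> C i) * (\<alpha> i j / cell_mass \<phi>D (C i))
                     * (cell_mass \<phi>P (B \<inter> C j) / cell_mass \<phi>P (C j)) =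
                     \<alpha> i j * (cell_mass \<phi>P (B \<inter> C j) / cell_mass \<phi>P (C j))" by simp
        qed
        also have "\<dots> = cell_mass \<phi>P (C j) * (cell_mass \<phi>P (B \<inter> C j) / cell_mass \<phi>P (C j))"
          using tm(3)[of j] j by (simp only: sum_distrib_right[symmetric] lessThan_iff)
        also have "\<dots> = cell_mass \<phi>P (B \<inter> C j)"
        proof (cases "cell_mass \<phi>P (C j) = 0")
          case True
          have "cell_mass \<phi>P (B \<inter> C j) \<le> cell_mass \<phi>P (C j)"
            unfolding cm using part(3) j B assms(5)
            by (intro integral_mono Pintind) (auto simp: indicator_def)
          moreover have "0 \<le> cell_mass \<phi>P (B \<inter> C j)"
            unfolding cm using assms(5) by (intro integral_nonneg_AE) auto
          ultimately show ?thesis using True by simp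
        qed simp
        finally show "measure M (E j) = cell_mass \<phi>P (B \<inter> C j)" .
      qed
      also have "\<dots> = (\<integral>x. (\<Sum>j<m. indicator (B \<inter> C j) x * \<phi>P x) \<partial>lborel)"
        unfolding cm using part(3) B by (subst Bochner_Integration.integral_sum) (auto intro!: Pintind)
      also have "\<dots> = (\<integral>x. \<phi>P x * indicator B x \<partial>lborel)"
      proof (rule Bochner_Integration.integral_cong[OF refl])
        fix x
        show "(\<Sum>j<m. indicator (B \<inter> C j) x * \<phi>P x) = \<phi>P x * indicator B x"
        proof (cases "x \<in> \<Omega>")
          case False
          then have "x \<notin> C j" if "j < m" for j using part(1) that by auto
          then show ?thesis using False assms(7) by (simp add: indicator_def)
        next
          case True
          then obtain j0 where j0: "j0 < m" "x \<in> C j0" using part(1) by auto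
          have "(\<Sum>j<m. indicator (B \<inter> C j) x * \<phi>P x) = indicator (B \<inter> C j0) x * \<phi>P x"
            using j0 part(2)
            by (intro sum.remove[THEN trans]) (auto simp: indicator_def intro!: sum.neutral)
          then show ?thesis using j0 by (simp add: indicator_def)
        qed
      qed
      finally show ?thesis .
    qed
    have "distr M lborel (X' k) = density lborel (\<lambda>x. ennreal (\<phi>P x))"
    proof (rule measure_eqI)
      fix B assume "B \<in> sets (distr M lborel (X' k))"
      then have B: "B \<in> sets borel" by simp
      have "emeasure (distr M lborel (X' k)) B = emeasure M (X' k -` B \<inter> space M)"
        using B X'm by (simp add: emeasure_distr)
      also have "\<dots> = ennreal (measure M (X' k -` B \<inter> space M))"
        by (simp add: emeasure_eq_measure)
      also have "\<dots> = ennreal (\<integral>x. \<phi>P x * indicator B x \<partial>lborel)" using key[OF B] by simp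
      also have "\<dots> = (\<integral>\<^sup>+x. ennreal (\<phi>P x * indicator B x) \<partial>lborel)"
        using Pintind[OF B] assms(5)
        by (intro nn_integral_eq_integral[symmetric]) (auto simp: mult.commute)
      also have "\<dots> = emeasure (density lborel (\<lambda>x. ennreal (\<phi>P x))) B"
        using B assms(3) by (simp add: emeasure_density, intro nn_integral_cong) (auto simp: indicator_def)
      finally show "emeasure (distr M lborel (X' k)) B = emeasure (density lborel (\<lambda>x. ennreal (\<phi>P x))) B" .
    qed simp
    then show ?thesis unfolding distributed_def using X'm assms(3) by simp
  qed
  show ?thesis using P1 P2 P3 by blast
qed

end
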